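(* Suppose $C(X)_\mathcal{P}$ contains the characteristic function $\chi_{\{x\}}$ for every $x\in X$. Then: (1) every free ideal and every essential ideal of $C(X)_\mathcal{P}$ has depth zero; (2) every maximal ideal of $C(X)_\mathcal{P}$ has depth zero; (3) every prime ideal of $C(X)_\mathcal{P}$ has depth zero.
   Context: Let $(X,\tau)$ be a $T_1$ topological space and $\mathcal{P}$ an ideal of closed subsets of $X$ (a nonempty family of closed sets closed under finite unions and under taking closed subsets). For $f\colon X\to\mathbb{R}$, $D_f$ denotes the set of points of discontinuity of $f$, and $C(X)_\mathcal{P}=\{f\colon X\to\mathbb{R} : \overline{D_f}\in\mathcal{P}\}$, a commutative ring with unity under pointwise operations. For $f\in C(X)_\mathcal{P}$, $Z_\mathcal{P}(f)=\{x: f(x)=0\}$; an ideal $I$ is free if $\bigcap\{Z_\mathcal{P}(f): f\in I\}=\emptyset$. An ideal is essential if it intersects every nonzero ideal nontrivially. For an ideal $I$ regarded as a $C(X)_\mathcal{P}$-module $M$, an element $a$ is $M$-regular if $am\neq 0$ for all $m\in M\setminus\{0\}$; a sequence $a_1,\dots,a_n$ is $I$-regular if $a_1$ is $I$-regular, each $a_k$ is $I/(a_1I+\dots+a_{k-1}I)$-regular, and $a_1I+\dots+a_nI\neq I$; the depth of $I$ is the length of a maximal $I$-regular sequence. *)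

theory Defs
  imports "HOL-Analysis.Analysis"
begin

text \<open>The T1 space X is the type 'a of class t1_space (so X = UNIV).\<close>

definition disc :: "('a::topological_space \<Rightarrow> real) \<Rightarrow> 'a set" where
  "disc f = {x. \<not> (f \<longlongrightarrow> f x) (at x)}"

definition closed_set_ideal :: "'a::topological_space set set \<Rightarrow> bool" where
  "closed_set_ideal P \<longleftrightarrow> P \<noteq> {} \<and> (\<forall>A\<in>P. closed A) \<and>
     (\<forall>A\<in>P. \<forall>B\<in>P. A \<union> B \<in> P) \<and>
     (\<forall>A\<in>P. \<forall>B. closed B \<and> B \<subseteq> A \<longrightarrow> B \<in> P)"

definition CP :: "'a::topological_space set set \<Rightarrow> ('a \<Rightarrow> real) set" where
  "CP P = {f. closure (disc f) \<in> P}"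

definition Zset :: "('a \<Rightarrow> real) \<Rightarrow> 'a set" where
  "Zset f = {x. f x = 0}"

definition ring_ideal :: "'a::topological_space set set \<Rightarrow> ('a \<Rightarrow> real) set \<Rightarrow> bool" where
  "ring_ideal P I \<longleftrightarrow> I \<subseteq> CP P \<and> (\<lambda>x. 0) \<in> I \<and>
     (\<forall>f\<in>I. \<forall>g\<in>I. (\<lambda>x. f x - g x) \<in> I) \<and>
     (\<forall>r\<in>CP P. \<forall>f\<in>I. (\<lambda>x. r x * f x) \<in> I)"

definition free_ideal :: "'a::topological_space set set \<Rightarrow> ('a \<Rightarrow> real) set \<Rightarrow> bool" where
  "free_ideal P I \<longleftrightarrow> ring_ideal P I \<and> (\<Inter>f\<in>I. Zset f) = {}"

definition essential_ideal :: "'a::topological_space set set \<Rightarrow> ('a \<Rightarrow> real) set \<Rightarrow> bool" where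
  "essential_ideal P I \<longleftrightarrow> ring_ideal P I \<and>
     (\<forall>J. ring_ideal P J \<and> J \<noteq> {\<lambda>x. 0} \<longrightarrow> I \<inter> J \<noteq> {\<lambda>x. 0})"

definition maximal_ideal :: "'a::topological_space set set \<Rightarrow> ('a \<Rightarrow> real) set \<Rightarrow> bool" where
  "maximal_ideal P I \<longleftrightarrow> ring_ideal P I \<and> I \<noteq> CP P \<and>
     (\<forall>J. ring_ideal P J \<and> I \<subseteq> J \<longrightarrow> J = I \<or> J = CP P)"

definition prime_ideal :: "'a::topological_space set set \<Rightarrow> ('a \<Rightarrow> real) set \<Rightarrow> bool" where
  "prime_ideal P I \<longleftrightarrow> ring_ideal P I \<and> I \<noteq> CP P \<and>
     (\<forall>f\<in>CP P. \<forall>g\<in>CP P. (\<lambda>x. f x * g x) \<in> I \<longrightarrow> f \<in> I \<or> g \<in> I)"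

definition submod :: "('a \<Rightarrow> real) set \<Rightarrow> ('a \<Rightarrow> real) list \<Rightarrow> ('a \<Rightarrow> real) set" where
  "submod I as = {(\<lambda>x. \<Sum>i<length as. (as ! i) x * ms i x) | ms.
                    \<forall>i<length as. ms i \<in> I}"

text \<open>a is (I/N)-regular: a*m is nonzero in I/N whenever m is nonzero in I/N.\<close>
definition quot_regular :: "('a \<Rightarrow> real) set \<Rightarrow> ('a \<Rightarrow> real) set \<Rightarrow> ('a \<Rightarrow> real) \<Rightarrow> bool" where
  "quot_regular I N a \<longleftrightarrow> (\<forall>m\<in>I. m \<notin> N \<longrightarrow> (\<lambda>x. a x * m x) \<notin> N)"

definition regular_seq :: "'a::topological_space set set \<Rightarrow> ('a \<Rightarrow> real) set \<Rightarrow> ('a \<Rightarrow> real) list \<Rightarrow> bool" where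
  "regular_seq P I as \<longleftrightarrow> set as \<subseteq> CP P \<and>
     (\<forall>k<length as. quot_regular I (submod I (take k as)) (as ! k)) \<and>
     submod I as \<noteq> I"

text \<open>Depth zero: the empty sequence is a maximal I-regular sequence,
  i.e. there is no nonempty I-regular sequence.\<close>
definition depth_zero :: "'a::topological_space set set \<Rightarrow> ('a \<Rightarrow> real) set \<Rightarrow> bool" where
  "depth_zero P I \<longleftrightarrow> \<not> (\<exists>as. as \<noteq> [] \<and> regular_seq P I as)"

end

theory Submission
  imports Defs
begin

lemma ideal_add:
  assumes "ring_ideal P I" "f \<in> I" "g \<in> I"
  shows "(\<lambda>x. f x + g x) \<in> I"
proof -
  have z: "(\<lambda>x. 0::real) \<in> I" and s: "\<forall>f\<in>I. \<forall>g\<in>I. (\<lambda>x. f x - g x) \<in> I"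
    using assms(1) unfolding ring_ideal_def by auto
  have h: "(\<lambda>x. 0 - g x) \<in> I" using bspec[OF bspec[OF s z] assms(3)] by simp
  show ?thesis using bspec[OF bspec[OF s assms(2)] h] by simp
qed

lemma submod_sub:
  assumes "ring_ideal P I" "set as \<subseteq> CP P" "\<forall>i<length as. ms i \<in> I"
  shows "n \<le> length as \<Longrightarrow> (\<lambda>x. \<Sum>i<n. (as!i) x * ms i x) \<in> I"
proof (induction n)
  case 0
  then show ?case using assms(1) unfolding ring_ideal_def by simp
next
  case (Suc n)
  have "as ! n \<in> CP P" using Suc.prems assms(2) by auto
  hence "(\<lambda>x. (as!n) x * ms n x) \<in> I" using assms(1,3) Suc.prems unfolding ring_ideal_def by auto
  from ideal_add[OF assms(1) Suc.IH[OF Suc_leD[OF Suc.prems]] this] show ?case by simp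
qed

lemma submod_subset:
  assumes "ring_ideal P I" "set as \<subseteq> CP P"
  shows "submod I as \<subseteq> I"
  using submod_sub[OF assms] unfolding submod_def by auto

lemma submod_nil: "submod I [] = {\<lambda>x. 0}"
  unfolding submod_def by auto

lemma lemmaB:
  assumes "ring_ideal P I" "regular_seq P I as" "as \<noteq> []"
    and "\<forall>f\<in>I. \<exists>g\<in>I. \<forall>y. f y = (as!0) y * g y"
  shows False
proof -
  have sa: "set as \<subseteq> CP P" using assms(2) unfolding regular_seq_def by auto
  have "I \<subseteq> submod I as"
  proof
    fix f assume "f \<in> I"
    then obtain g where g: "g \<in> I" "\<forall>y. f y = (as!0) y * g y" using assms(4) by blast
    define ms where "ms = (\<lambda>i::nat. if i = 0 then g else (\<lambda>x. 0::real))"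
    have z: "(\<lambda>x. 0::real) \<in> I" using assms(1) unfolding ring_ideal_def by auto
    have "\<forall>i<length as. ms i \<in> I" using g z unfolding ms_def by auto
    moreover have "f = (\<lambda>x. \<Sum>i<length as. (as ! i) x * ms i x)"
    proof
      fix x
      have "(\<Sum>i<length as. (as ! i) x * ms i x) = (\<Sum>i<length as. if i = 0 then (as!0) x * g x else 0)"
        by (rule sum.cong) (auto simp: ms_def)
      also have "\<dots> = (as!0) x * g x" using assms(3) by (simp add: sum.delta)
      finally show "f x = (\<Sum>i<length as. (as ! i) x * ms i x)" using g by simp
    qed
    ultimately show "f \<in> submod I as" unfolding submod_def by blast
  qed
  with submod_subset[OF assms(1) sa] have "submod I as = I" by blast
  thus False using assms(2) unfolding regular_seq_def by auto
qed

lemma CP_sub: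
  assumes P: "closed_set_ideal P" and "f \<in> CP P" "g \<in> CP P" "k \<in> CP P"
    and "disc h \<subseteq> disc f \<union> disc g \<union> disc k"
  shows "h \<in> CP P"
proof -
  have un: "\<forall>A\<in>P. \<forall>B\<in>P. A \<union> B \<in> P" and dn: "\<forall>A\<in>P. \<forall>B. closed B \<and> B \<subseteq> A \<longrightarrow> B \<in> P"
    using P unfolding closed_set_ideal_def by blast+
  have "closure (disc f) \<in> P" "closure (disc g) \<in> P" "closure (disc k) \<in> P"
    using assms(2-4) unfolding CP_def by blast+
  hence U: "closure (disc f) \<union> closure (disc g) \<union> closure (disc k) \<in> P" using un by blast
  have "closure (disc h) \<subseteq> closure (disc f) \<union> closure (disc g) \<union> closure (disc k)"
    using closure_mono[OF assms(5)] by (simp add: closure_Un)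
  hence "closure (disc h) \<in> P" using dn U by blast
  thus ?thesis unfolding CP_def by blast
qed

lemma const_CP:
  fixes P :: "'a::topological_space set set"
  assumes P: "closed_set_ideal P"
  shows "(\<lambda>x. c) \<in> CP P"
proof -
  have "disc (\<lambda>x::'a. c) = {}" unfolding disc_def by auto
  moreover have "P \<noteq> {}" using P unfolding closed_set_ideal_def by blast
  then obtain A where A: "A \<in> P" by blast
  moreover have dn: "\<forall>A\<in>P. \<forall>B. closed B \<and> B \<subseteq> A \<longrightarrow> B \<in> P"
    using P unfolding closed_set_ideal_def by blast
  ultimately have "{} \<in> P" using closed_empty by blast
  hence "closure (disc (\<lambda>x. c)) \<in> P" using \<open>disc (\<lambda>x::'a. c) = {}\<close> by simp
  thus ?thesis unfolding CP_def by blast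
qed

lemma disc_inv:
  assumes "\<forall>y. a y \<noteq> 0"
  shows "disc (\<lambda>y. inverse (a y)) \<subseteq> disc a"
proof
  fix y assume y: "y \<in> disc (\<lambda>y. inverse (a y))"
  show "y \<in> disc a"
  proof (rule ccontr)
    assume "y \<notin> disc a"
    hence "(a \<longlongrightarrow> a y) (at y)" unfolding disc_def by blast
    from tendsto_inverse[OF this] assms have "((\<lambda>y. inverse (a y)) \<longlongrightarrow> inverse (a y)) (at y)" by blast
    thus False using y unfolding disc_def by blast
  qed
qed

lemma disc_div:
  fixes a f :: "'a::t1_space \<Rightarrow> real"
  assumes nz: "\<forall>y. y \<noteq> x \<longrightarrow> a y \<noteq> 0"
  shows "disc (\<lambda>y. f y / a y) \<subseteq> disc f \<union> disc a \<union> disc (\<lambda>y. if y = x then 1 else 0)"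
proof
  fix y assume y: "y \<in> disc (\<lambda>y. f y / a y)"
  show "y \<in> disc f \<union> disc a \<union> disc (\<lambda>y. if y = x then 1 else 0)"
  proof (cases "y = x")
    case False
    show ?thesis
    proof (rule ccontr)
      assume "\<not> ?thesis"
      hence t1: "(f \<longlongrightarrow> f y) (at y)" and t2: "(a \<longlongrightarrow> a y) (at y)" unfolding disc_def by auto
      have "a y \<noteq> 0" using nz False by blast
      from tendsto_divide[OF t1 t2 this] have "((\<lambda>y. f y / a y) \<longlongrightarrow> f y / a y) (at y)" .
      thus False using y unfolding disc_def by blast
    qed
  next
    case True
    show ?thesis
    proof (rule ccontr)
      assume "\<not> ?thesis"
      hence "((\<lambda>y. if y = x then 1 else 0) \<longlongrightarrow> (1::real)) (at x)"
        using True unfolding disc_def by auto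
      hence e1: "eventually (\<lambda>z. (if z = x then 1 else 0) > (1/2::real)) (at x)"
        by (rule order_tendstoD) simp
      have e2: "eventually (\<lambda>z. z \<noteq> x) (at x)"
        unfolding eventually_at_filter by simp
      have "eventually (\<lambda>z. False) (at x)"
        using eventually_conj[OF e1 e2] by (rule eventually_mono) (simp split: if_splits)
      hence "at x = bot" by (simp add: eventually_False)
      hence "((\<lambda>y. f y / a y) \<longlongrightarrow> f y / a y) (at y)" using True by simp
      thus False using y unfolding disc_def by blast
    qed
  qed
qed

lemma disc_mult: "disc (\<lambda>y. f y * g y) \<subseteq> disc f \<union> disc g"
proof
  fix y assume y: "y \<in> disc (\<lambda>y. f y * g y)"
  show "y \<in> disc f \<union> disc g"
  proof (rule ccontr)
    assume "y \<notin> disc f \<union> disc g"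
    hence t1: "(f \<longlongrightarrow> f y) (at y)" and t2: "(g \<longlongrightarrow> g y) (at y)" unfolding disc_def by blast+
    from tendsto_mult[OF t1 t2] have "((\<lambda>y. f y * g y) \<longlongrightarrow> f y * g y) (at y)" .
    thus False using y unfolding disc_def by blast
  qed
qed

lemma disc_diff: "disc (\<lambda>y. f y - g y) \<subseteq> disc f \<union> disc g"
proof
  fix y assume y: "y \<in> disc (\<lambda>y. f y - g y)"
  show "y \<in> disc f \<union> disc g"
  proof (rule ccontr)
    assume "y \<notin> disc f \<union> disc g"
    hence t1: "(f \<longlongrightarrow> f y) (at y)" and t2: "(g \<longlongrightarrow> g y) (at y)" unfolding disc_def by blast+
    from tendsto_diff[OF t1 t2] have "((\<lambda>y. f y - g y) \<longlongrightarrow> f y - g y) (at y)" .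
    thus False using y unfolding disc_def by blast
  qed
qed

lemma mult_CP:
  assumes "closed_set_ideal P" "f \<in> CP P" "g \<in> CP P"
  shows "(\<lambda>y. f y * g y) \<in> CP P"
  using CP_sub[OF assms(1,2,3,3)] disc_mult by blast

lemma diff_CP:
  assumes "closed_set_ideal P" "f \<in> CP P" "g \<in> CP P"
  shows "(\<lambda>y. f y - g y) \<in> CP P"
  using CP_sub[OF assms(1,2,3,3)] disc_diff by blast

lemma Mx_ideal:
  assumes "closed_set_ideal P"
  shows "ring_ideal P {f\<in>CP P. f x = 0}"
  unfolding ring_ideal_def
proof (intro conjI ballI)
  show "{f \<in> CP P. f x = 0} \<subseteq> CP P" by blast
  show "(\<lambda>x. 0) \<in> {f \<in> CP P. f x = 0}" using const_CP[OF assms, of 0] by simp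
next
  fix f g assume "f \<in> {f \<in> CP P. f x = 0}" "g \<in> {f \<in> CP P. f x = 0}"
  thus "(\<lambda>x. f x - g x) \<in> {f \<in> CP P. f x = 0}" using diff_CP[OF assms, of f g] by simp
next
  fix r f assume "r \<in> CP P" "f \<in> {f \<in> CP P. f x = 0}"
  thus "(\<lambda>x. r x * f x) \<in> {f \<in> CP P. f x = 0}" using mult_CP[OF assms, of r f] by simp
qed

lemma lemmaA:
  assumes "ring_ideal P I" "\<forall>x. (\<lambda>y. if y = x then 1 else 0) \<in> CP P"
    and R: "\<forall>m\<in>I. m \<noteq> (\<lambda>x. 0) \<longrightarrow> (\<lambda>x. a x * m x) \<noteq> (\<lambda>x. 0)"
    and "a x = 0" "f \<in> I"
  shows "f x = 0"
proof -
  let ?h = "\<lambda>y. (if y = x then 1 else 0) * f y"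
  have mu: "\<forall>r\<in>CP P. \<forall>g\<in>I. (\<lambda>x. r x * g x) \<in> I" using assms(1) unfolding ring_ideal_def by blast
  have "?h \<in> I" using bspec[OF bspec[OF mu assms(2)[rule_format, of x]] assms(5)] by simp
  moreover have "(\<lambda>y. a y * ?h y) = (\<lambda>x. 0)" using assms(4) by (auto simp: fun_eq_iff)
  ultimately have "?h = (\<lambda>x. 0)" using R by blast
  from fun_cong[OF this, of x] show ?thesis by simp
qed

lemma regular_first:
  assumes "regular_seq P I as" "as \<noteq> []"
  shows "\<forall>m\<in>I. m \<noteq> (\<lambda>x. 0) \<longrightarrow> (\<lambda>x. (as!0) x * m x) \<noteq> (\<lambda>x. 0)"
proof -
  have "quot_regular I (submod I (take 0 as)) (as ! 0)"
  proof -
    have "\<forall>k<length as. quot_regular I (submod I (take k as)) (as ! k)"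
      using assms(1) unfolding regular_seq_def by blast
    moreover have "0 < length as" using assms(2) by simp
    ultimately show ?thesis by blast
  qed
  thus ?thesis unfolding quot_regular_def by (simp add: submod_nil)
qed

lemma lemmaE:
  assumes P: "closed_set_ideal P" and chi: "\<forall>x. (\<lambda>y. if y = x then 1 else 0) \<in> CP P"
    and I: "ring_ideal P I" and rs: "regular_seq P I as" and ne: "as \<noteq> []"
  shows "\<exists>x. (as!0) x = 0 \<and> (\<forall>f\<in>I. f x = 0)"
proof (cases "\<forall>y. (as!0) y \<noteq> 0")
  case True
  have aCP: "as!0 \<in> CP P"
  proof -
    have "as!0 \<in> set as" using ne by (simp add: nth_mem)
    moreover have "set as \<subseteq> CP P" using rs unfolding regular_seq_def by blast
    ultimately show ?thesis by blast
  qed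
  have iCP: "(\<lambda>y. inverse ((as!0) y)) \<in> CP P"
    using CP_sub[OF P aCP aCP aCP, of "\<lambda>y. inverse ((as!0) y)"] disc_inv[OF True] by blast
  have "\<forall>f\<in>I. \<exists>g\<in>I. \<forall>y. f y = (as!0) y * g y"
  proof
    fix f assume f: "f \<in> I"
    have mu: "\<forall>r\<in>CP P. \<forall>g\<in>I. (\<lambda>x. r x * g x) \<in> I" using I unfolding ring_ideal_def by blast
    have "(\<lambda>y. inverse ((as!0) y) * f y) \<in> I" using bspec[OF bspec[OF mu iCP] f] by simp
    moreover have "\<forall>y. f y = (as!0) y * (inverse ((as!0) y) * f y)" using True by simp
    ultimately show "\<exists>g\<in>I. \<forall>y. f y = (as!0) y * g y" by (intro bexI[of _ "\<lambda>y. inverse ((as!0) y) * f y"])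
  qed
  with lemmaB[OF I rs ne] show ?thesis by blast
next
  case False
  then obtain x where x: "(as!0) x = 0" by blast
  show ?thesis using lemmaA[OF I chi regular_first[OF rs ne] x] x by blast
qed

lemma lemmaF:
  fixes P :: "'a::t1_space set set"
  assumes P: "closed_set_ideal P" and chi: "\<forall>x. (\<lambda>y. if y = x then 1 else 0) \<in> CP P"
    and I: "ring_ideal P I" and rs: "regular_seq P I as" and ne: "as \<noteq> []"
    and Ix: "I = {f\<in>CP P. f x = 0}" and x: "(as!0) x = 0"
  shows False
proof -
  have aCP: "as!0 \<in> CP P"
  proof -
    have "as!0 \<in> set as" using ne by (simp add: nth_mem)
    moreover have "set as \<subseteq> CP P" using rs unfolding regular_seq_def by blast
    ultimately show ?thesis by blast
  qed
  have nz: "\<forall>y. y \<noteq> x \<longrightarrow> (as!0) y \<noteq> 0"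
  proof (intro allI impI notI)
    fix y assume yx: "y \<noteq> x" and ay: "(as!0) y = 0"
    have "(\<lambda>z. if z = y then 1 else 0) \<in> CP P" using chi by blast
    hence "(\<lambda>z. if z = y then 1 else 0) \<in> I" using yx by (simp add: Ix)
    from lemmaA[OF I chi regular_first[OF rs ne] ay this] show False by simp
  qed
  have "\<forall>f\<in>I. \<exists>g\<in>I. \<forall>y. f y = (as!0) y * g y"
  proof
    fix f assume f: "f \<in> I"
    have fCP: "f \<in> CP P" and fx: "f x = 0" using f unfolding Ix by blast+
    have "(\<lambda>y. f y / (as!0) y) \<in> CP P"
      using CP_sub[OF P fCP aCP chi[rule_format, of x], of "\<lambda>y. f y / (as!0) y"] disc_div[OF nz, of f] by blast
    hence "(\<lambda>y. f y / (as!0) y) \<in> I" using Ix x by simp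
    moreover have "\<forall>y. f y = (as!0) y * (f y / (as!0) y)"
    proof
      fix y show "f y = (as!0) y * (f y / (as!0) y)"
      proof (cases "y = x")
        case True thus ?thesis using fx by simp
      next
        case False thus ?thesis using nz by simp
      qed
    qed
    ultimately show "\<exists>g\<in>I. \<forall>y. f y = (as!0) y * g y" by (intro bexI[of _ "\<lambda>y. f y / (as!0) y"])
  qed
  with lemmaB[OF I rs ne] show False by blast
qed

lemma part1:
  fixes P :: "'a::t1_space set set"
  assumes "closed_set_ideal P"
    and "\<forall>x. (\<lambda>y. if y = x then 1 else 0) \<in> CP P"
  shows "\<forall>I. free_ideal P I \<or> essential_ideal P I \<longrightarrow> depth_zero P I"
proof (intro allI impI)
  note P = assms(1) and chi = assms(2)
  fix I assume h: "free_ideal P I \<or> essential_ideal P I"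
  show "depth_zero P I" unfolding depth_zero_def
  proof
    assume "\<exists>as. as \<noteq> [] \<and> regular_seq P I as"
    then obtain as where ne: "as \<noteq> []" and rs: "regular_seq P I as" by blast
    have I: "ring_ideal P I" using h unfolding free_ideal_def essential_ideal_def by auto
    obtain x where x: "\<forall>f\<in>I. f x = 0" using lemmaE[OF P chi I rs ne] by blast
    show False using h
    proof
      assume "free_ideal P I"
      moreover have "x \<in> (\<Inter>f\<in>I. Zset f)" using x unfolding Zset_def by auto
      ultimately show False using \<open>free_ideal P I\<close> unfolding free_ideal_def by auto
    next
      assume ess: "essential_ideal P I"
      let ?c = "\<lambda>y. if y = x then 1 else (0::real)"
      define J where "J = {(\<lambda>y. c * ?c y) | c. True}"
      have cCP: "\<And>c. (\<lambda>y. c * ?c y) \<in> CP P"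
        using mult_CP[OF P const_CP[OF P] chi[rule_format, of x]] by blast
      have "ring_ideal P J" unfolding ring_ideal_def
      proof (intro conjI ballI)
        show "J \<subseteq> CP P" using cCP unfolding J_def by auto
        show "(\<lambda>x. 0) \<in> J" unfolding J_def by (rule CollectI, rule exI[of _ 0]) auto
      next
        fix f g assume "f \<in> J" "g \<in> J"
        then obtain c d where "f = (\<lambda>y. c * ?c y)" "g = (\<lambda>y. d * ?c y)" unfolding J_def by auto
        hence "(\<lambda>x. f x - g x) = (\<lambda>y. (c - d) * ?c y)" by (auto simp: fun_eq_iff algebra_simps)
        thus "(\<lambda>x. f x - g x) \<in> J" unfolding J_def by blast
      next
        fix r f assume "r \<in> CP P" "f \<in> J"
        then obtain c where "f = (\<lambda>y. c * ?c y)" unfolding J_def by auto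
        hence "(\<lambda>x. r x * f x) = (\<lambda>y. (r x * c) * ?c y)" by (auto simp: fun_eq_iff)
        thus "(\<lambda>x. r x * f x) \<in> J" unfolding J_def by blast
      qed
      moreover have "J \<noteq> {\<lambda>x. 0}"
      proof
        assume "J = {\<lambda>x. 0}"
        moreover have "(\<lambda>y. 1 * ?c y) \<in> J" unfolding J_def by blast
        ultimately have "(\<lambda>y. 1 * ?c y) = (\<lambda>x. 0)" by blast
        thus False by (metis (mono_tags) mult_1 zero_neq_one)
      qed
      ultimately have "I \<inter> J \<noteq> {\<lambda>x. 0}" using ess unfolding essential_ideal_def by blast
      moreover have "(\<lambda>x. 0) \<in> I \<inter> J" using I \<open>ring_ideal P J\<close> unfolding ring_ideal_def by auto
      ultimately obtain f where f: "f \<in> I" "f \<in> J" "f \<noteq> (\<lambda>x. 0)" by blast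
      then obtain c where fc: "f = (\<lambda>y. c * ?c y)" unfolding J_def by auto
      have "c = 0" using x f(1) fc by auto
      thus False using f(3) fc by simp
    qed
  qed
qed

lemma part2:
  fixes P :: "'a::t1_space set set"
  assumes "closed_set_ideal P"
    and "\<forall>x. (\<lambda>y. if y = x then 1 else 0) \<in> CP P"
  shows "\<forall>I. maximal_ideal P I \<longrightarrow> depth_zero P I"
proof (intro allI impI)
  note P = assms(1) and chi = assms(2)
  fix I assume m: "maximal_ideal P I"
  show "depth_zero P I" unfolding depth_zero_def
  proof
    assume "\<exists>as. as \<noteq> [] \<and> regular_seq P I as"
    then obtain as where ne: "as \<noteq> []" and rs: "regular_seq P I as" by blast
    have I: "ring_ideal P I" using m unfolding maximal_ideal_def by auto
    obtain x where x: "(as!0) x = 0" "\<forall>f\<in>I. f x = 0" using lemmaE[OF P chi I rs ne] by blast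
    have sub: "I \<subseteq> {f\<in>CP P. f x = 0}" using x I unfolding ring_ideal_def by auto
    have "{f\<in>CP P. f x = 0} \<noteq> CP P" using const_CP[OF P, of 1] by auto
    hence "{f\<in>CP P. f x = 0} = I" using m Mx_ideal[OF P, of x] sub unfolding maximal_ideal_def by blast
    from lemmaF[OF P chi I rs ne this[symmetric] x(1)] show False .
  qed
qed

lemma part3:
  fixes P :: "'a::t1_space set set"
  assumes "closed_set_ideal P"
    and "\<forall>x. (\<lambda>y. if y = x then 1 else 0) \<in> CP P"
  shows "\<forall>I. prime_ideal P I \<longrightarrow> depth_zero P I"
proof (intro allI impI)
  note P = assms(1) and chi = assms(2)
  fix I assume p: "prime_ideal P I"
  show "depth_zero P I" unfolding depth_zero_def
  proof
    assume "\<exists>as. as \<noteq> [] \<and> regular_seq P I as"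
    then obtain as where ne: "as \<noteq> []" and rs: "regular_seq P I as" by blast
    have I: "ring_ideal P I" using p unfolding prime_ideal_def by auto
    obtain x where x: "(as!0) x = 0" "\<forall>f\<in>I. f x = 0" using lemmaE[OF P chi I rs ne] by blast
    let ?c = "\<lambda>y. if y = x then 1 else (0::real)"
    let ?u = "\<lambda>y. 1 - ?c y"
    have cCP: "?c \<in> CP P" using chi by blast
    have uCP: "?u \<in> CP P" using diff_CP[OF P const_CP[OF P] cCP] by blast
    have e: "(\<lambda>y. ?c y * ?u y) = (\<lambda>x. 0)" by (auto simp: fun_eq_iff)
    have "(\<lambda>x. 0) \<in> I" using I unfolding ring_ideal_def by auto
    hence cu: "(\<lambda>y. ?c y * ?u y) \<in> I" by (simp only: e)
    have pr: "\<forall>f\<in>CP P. \<forall>g\<in>CP P. (\<lambda>x. f x * g x) \<in> I \<longrightarrow> f \<in> I \<or> g \<in> I"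
      using p unfolding prime_ideal_def by blast
    have "?c \<in> I \<or> ?u \<in> I" using bspec[OF bspec[OF pr cCP] uCP] cu by blast
    moreover have "?c \<notin> I" using x(2) by auto
    ultimately have uI: "?u \<in> I" by blast
    have "{f\<in>CP P. f x = 0} = I"
    proof
      have "I \<subseteq> CP P" using I unfolding ring_ideal_def by blast
      thus "I \<subseteq> {f\<in>CP P. f x = 0}" using x(2) by blast
      show "{f\<in>CP P. f x = 0} \<subseteq> I"
      proof
        fix f assume f: "f \<in> {f\<in>CP P. f x = 0}"
        have mu: "\<forall>r\<in>CP P. \<forall>g\<in>I. (\<lambda>x. r x * g x) \<in> I" using I unfolding ring_ideal_def by blast
        have "f \<in> CP P" using f by blast
        hence "(\<lambda>y. f y * ?u y) \<in> I" using bspec[OF bspec[OF mu] uI] by blast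
        moreover have "(\<lambda>y. f y * ?u y) = f" using f by (auto simp: fun_eq_iff)
        ultimately show "f \<in> I" by simp
      qed
    qed
    from lemmaF[OF P chi I rs ne this[symmetric] x(1)] show False .
  qed
qed

theorem theorem4p6:
  fixes P :: "'a::t1_space set set"
  assumes "closed_set_ideal P"
    and "\<forall>x. (\<lambda>y. if y = x then 1 else 0) \<in> CP P"
  shows "(\<forall>I. free_ideal P I \<or> essential_ideal P I \<longrightarrow> depth_zero P I) \<and>
         (\<forall>I. maximal_ideal P I \<longrightarrow> depth_zero P I) \<and>
         (\<forall>I. prime_ideal P I \<longrightarrow> depth_zero P I)"
  using part1[OF assms] part2[OF assms] part3[OF assms] by blast

end
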